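(* Let $\boldsymbol\beta$ be ERGM parameters, $m_n\to\infty$ with $\binom{m_n}{2}=o(\log n)$, and let $\mathcal{G}_{n,1},\dots,\mathcal{G}_{n,n}$ be i.i.d. from $\mathbb{P}_{\boldsymbol\beta}$ on $m_n$ vertices. For a graph $G$ on $m_n$ vertices let $p_{\boldsymbol\beta}(G)=\mathbb{P}_{\boldsymbol\beta}(G)$ and $X_{i,G}=\mathbf{1}(\mathcal{G}_{n,i}=G)/p_{\boldsymbol\beta}(G)$. Then for every $\epsilon>0$, \[\mathbb{P}\Big(\sup_{G}\Big|\frac1n\sum_{i=1}^nX_{i,G}-1\Big|>\frac{\epsilon}{m_n}\Big)\to0,\] the supremum being over all simple graphs $G$ on vertex set $\{1,\dots,m_n\}$.
   Context: ERGM: $\mathbb{P}_{\boldsymbol\beta}(G)=Z_N(\boldsymbol\beta)^{-1}\exp\{N^2\sum_{k=1}^K\beta_kt(T_k,G)\}$ on simple graphs with vertex set $\{1,\dots,N\}$, where $T_1$ is a single edge, $T_2,\dots,T_K$ are fixed graphs with at least two edges, $\boldsymbol\beta\in\mathbb{R}^K$, and $t(T,G)=\mathrm{hom}(T,G)/N^{v(T)}$ with $\mathrm{hom}$ counting edge-preserving maps $V(T)\to V(G)$. *)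

theory Defs
  imports "HOL-Analysis.Analysis" "HOL-Library.FuncSet" "HOL-Library.Landau_Symbols"
begin

definition simple_graph :: "'a set \<Rightarrow> 'a set set \<Rightarrow> bool" where
  "simple_graph V E \<longleftrightarrow> finite V \<and> (\<forall>e\<in>E. e \<subseteq> V \<and> card e = 2)"

definition graphs_on :: "nat \<Rightarrow> nat set set set" where
  "graphs_on N = {E. simple_graph {1..N} E}"

definition hom_count :: "nat set \<times> nat set set \<Rightarrow> nat \<Rightarrow> nat set set \<Rightarrow> nat" where
  "hom_count T N G = card {\<phi> \<in> fst T \<rightarrow>\<^sub>E {1..N}. \<forall>e\<in>snd T. \<phi> ` e \<in> G}"

definition hom_density :: "nat set \<times> nat set set \<Rightarrow> nat \<Rightarrow> nat set set \<Rightarrow> real" where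
  "hom_density T N G = real (hom_count T N G) / real N ^ card (fst T)"

definition ergm_weight :: "nat \<Rightarrow> (nat \<Rightarrow> real) \<Rightarrow> (nat \<Rightarrow> nat set \<times> nat set set) \<Rightarrow> nat \<Rightarrow> nat set set \<Rightarrow> real" where
  "ergm_weight K \<beta> T N G = exp (real N ^ 2 * (\<Sum>k=1..K. \<beta> k * hom_density (T k) N G))"

definition ergm_prob :: "nat \<Rightarrow> (nat \<Rightarrow> real) \<Rightarrow> (nat \<Rightarrow> nat set \<times> nat set set) \<Rightarrow> nat \<Rightarrow> nat set set \<Rightarrow> real" where
  "ergm_prob K \<beta> T N G = ergm_weight K \<beta> T N G / (\<Sum>H\<in>graphs_on N. ergm_weight K \<beta> T N H)"

definition iid_prob :: "nat \<Rightarrow> (nat \<Rightarrow> real) \<Rightarrow> (nat \<Rightarrow> nat set \<times> nat set set) \<Rightarrow> nat \<Rightarrow> nat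
    \<Rightarrow> ((nat \<Rightarrow> nat set set) \<Rightarrow> bool) \<Rightarrow> real" where
  "iid_prob K \<beta> T N n P =
     (\<Sum>s\<in>{1..n} \<rightarrow>\<^sub>E graphs_on N. if P s then (\<Prod>i=1..n. ergm_prob K \<beta> T N (s i)) else 0)"

definition X_stat :: "nat \<Rightarrow> (nat \<Rightarrow> real) \<Rightarrow> (nat \<Rightarrow> nat set \<times> nat set set) \<Rightarrow> nat
    \<Rightarrow> (nat \<Rightarrow> nat set set) \<Rightarrow> nat \<Rightarrow> nat set set \<Rightarrow> real" where
  "X_stat K \<beta> T N s i G = (if s i = G then 1 else 0) / ergm_prob K \<beta> T N G"

end

theory Submission
  imports Defs "HOL-Real_Asymp.Real_Asymp"
begin

lemma total_prob:
  fixes p :: "'a \<Rightarrow> real"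
  assumes "finite I" "finite \<Omega>" "sum p \<Omega> = 1"
  shows "(\<Sum>s\<in>I \<rightarrow>\<^sub>E \<Omega>. \<Prod>k\<in>I. p (s k)) = 1"
  using prod_sum_PiE[of I "\<lambda>_. \<Omega>" "\<lambda>_ x. p x"] assms by simp

lemma pair_moment:
  fixes p g h :: "'a \<Rightarrow> real"
  assumes I: "finite I" and Om: "finite \<Omega>" and p1: "sum p \<Omega> = 1" and i: "i \<in> I" and j: "j \<in> I"
  shows "(\<Sum>s\<in>I \<rightarrow>\<^sub>E \<Omega>. (\<Prod>k\<in>I. p (s k)) * (g (s i) * h (s j))) =
     (if i = j then (\<Sum>x\<in>\<Omega>. p x * (g x * h x)) else (\<Sum>x\<in>\<Omega>. p x * g x) * (\<Sum>x\<in>\<Omega>. p x * h x))"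
proof -
  define f where "f k x = p x * (if k = i then g x else 1) * (if k = j then h x else 1)" for k x
  have eq1: "(\<Prod>k\<in>I. p (s k)) * (g (s i) * h (s j)) = (\<Prod>k\<in>I. f k (s k))" for s
  proof -
    have "(\<Prod>k\<in>I. f k (s k)) = (\<Prod>k\<in>I. p (s k)) * (\<Prod>k\<in>I. if k = i then g (s k) else 1)
        * (\<Prod>k\<in>I. if k = j then h (s k) else 1)"
      by (simp add: f_def prod.distrib)
    also have "\<dots> = (\<Prod>k\<in>I. p (s k)) * (g (s i) * h (s j))" using I i j by simp
    finally show ?thesis by simp
  qed
  have "(\<Sum>s\<in>I \<rightarrow>\<^sub>E \<Omega>. (\<Prod>k\<in>I. p (s k)) * (g (s i) * h (s j))) = (\<Sum>s\<in>I \<rightarrow>\<^sub>E \<Omega>. \<Prod>k\<in>I. f k (s k))"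
    by (simp add: eq1)
  also have "\<dots> = (\<Prod>k\<in>I. \<Sum>x\<in>\<Omega>. f k x)" using prod_sum_PiE[of I "\<lambda>_. \<Omega>" f] I Om by simp
  also have "\<dots> = (if i = j then (\<Sum>x\<in>\<Omega>. p x * (g x * h x)) else (\<Sum>x\<in>\<Omega>. p x * g x) * (\<Sum>x\<in>\<Omega>. p x * h x))"
  proof (cases "i = j")
    case True
    have "(\<Prod>k\<in>I. \<Sum>x\<in>\<Omega>. f k x) = (\<Sum>x\<in>\<Omega>. f i x) * (\<Prod>k\<in>I-{i}. \<Sum>x\<in>\<Omega>. f k x)"
      using I i by (simp add: prod.remove)
    also have "(\<Prod>k\<in>I-{i}. \<Sum>x\<in>\<Omega>. f k x) = 1" using p1 True by (intro prod.neutral) (auto simp: f_def)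
    finally show ?thesis using True by (simp add: f_def mult.assoc)
  next
    case False
    have "(\<Prod>k\<in>I. \<Sum>x\<in>\<Omega>. f k x) = (\<Sum>x\<in>\<Omega>. f i x) * (\<Prod>k\<in>I-{i}. \<Sum>x\<in>\<Omega>. f k x)"
      using I i by (simp add: prod.remove)
    also have "(\<Prod>k\<in>I-{i}. \<Sum>x\<in>\<Omega>. f k x) = (\<Sum>x\<in>\<Omega>. f j x) * (\<Prod>k\<in>I-{i}-{j}. \<Sum>x\<in>\<Omega>. f k x)"
      using I j False by (intro prod.remove) auto
    also have "(\<Prod>k\<in>I-{i}-{j}. \<Sum>x\<in>\<Omega>. f k x) = 1" using p1 by (intro prod.neutral) (auto simp: f_def)
    finally show ?thesis using False by (simp add: f_def)
  qed
  finally show ?thesis .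
qed

lemma second_moment:
  fixes p Z :: "'a \<Rightarrow> real"
  assumes Om: "finite \<Omega>" and p1: "sum p \<Omega> = 1" and z0: "(\<Sum>x\<in>\<Omega>. p x * Z x) = 0"
  shows "(\<Sum>s\<in>{1..n} \<rightarrow>\<^sub>E \<Omega>. (\<Prod>k\<in>{1..n}. p (s k)) * (\<Sum>i\<in>{1..n}. Z (s i))^2)
     = real n * (\<Sum>x\<in>\<Omega>. p x * (Z x * Z x))"
proof -
  have "(\<Sum>s\<in>{1..n} \<rightarrow>\<^sub>E \<Omega>. (\<Prod>k\<in>{1..n}. p (s k)) * (\<Sum>i\<in>{1..n}. Z (s i))^2)
     = (\<Sum>s\<in>{1..n} \<rightarrow>\<^sub>E \<Omega>. \<Sum>i\<in>{1..n}. \<Sum>j\<in>{1..n}. (\<Prod>k\<in>{1..n}. p (s k)) * (Z (s i) * Z (s j)))"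
  proof -
    have sq: "(\<Sum>i\<in>{1..n}. Z (s i))^2 = (\<Sum>i\<in>{1..n}. \<Sum>j\<in>{1..n}. Z (s i) * Z (s j))" for s
      by (simp add: power2_eq_square sum_product)
    show ?thesis by (simp only: sq sum_distrib_left)
  qed
  also have "\<dots> = (\<Sum>i\<in>{1..n}. \<Sum>s\<in>{1..n} \<rightarrow>\<^sub>E \<Omega>. \<Sum>j\<in>{1..n}. (\<Prod>k\<in>{1..n}. p (s k)) * (Z (s i) * Z (s j)))"
    by (rule sum.swap)
  also have "\<dots> = (\<Sum>i\<in>{1..n}. \<Sum>j\<in>{1..n}. \<Sum>s\<in>{1..n} \<rightarrow>\<^sub>E \<Omega>. (\<Prod>k\<in>{1..n}. p (s k)) * (Z (s i) * Z (s j)))"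
    by (intro sum.cong refl sum.swap)
  also have "\<dots> = (\<Sum>i\<in>{1..n}. \<Sum>j\<in>{1..n}. if i = j then (\<Sum>x\<in>\<Omega>. p x * (Z x * Z x)) else 0)"
    by (intro sum.cong refl) (simp add: pair_moment Om p1 z0)
  also have "\<dots> = real n * (\<Sum>x\<in>\<Omega>. p x * (Z x * Z x))" by simp
  finally show ?thesis .
qed


lemma graphs_on_sub: "graphs_on N \<subseteq> Pow {e. e \<subseteq> {1..N} \<and> card e = 2}"
  by (auto simp: graphs_on_def simple_graph_def)

lemma graphs_on_finite: "finite (graphs_on N)"
  by (rule finite_subset[OF graphs_on_sub]) auto

lemma empty_in_graphs_on: "{} \<in> graphs_on N"
  by (simp add: graphs_on_def simple_graph_def)

lemma card_graphs_on: "card (graphs_on N) \<le> 2 ^ (N choose 2)"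
proof -
  have "card (graphs_on N) \<le> card (Pow {e. e \<subseteq> {1..N} \<and> card e = 2})"
    by (rule card_mono[OF _ graphs_on_sub]) auto
  also have "\<dots> = 2 ^ card {e. e \<subseteq> {1..N} \<and> card e = 2}"
    by (rule card_Pow) auto
  also have "card {e. e \<subseteq> {1..N} \<and> card e = 2} = N choose 2"
    using n_subsets[of "{1..N}" 2] by simp
  finally show ?thesis .
qed

lemma density_bounds:
  assumes "finite (fst T)" "N \<ge> 1"
  shows "0 \<le> hom_density T N G \<and> hom_density T N G \<le> 1"
proof -
  have "hom_count T N G \<le> card (fst T \<rightarrow>\<^sub>E {1..N})"
    unfolding hom_count_def by (rule card_mono) (auto intro: finite_PiE assms)
  also have "\<dots> = N ^ card (fst T)" using assms by (simp add: card_PiE)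
  finally have "real (hom_count T N G) \<le> real N ^ card (fst T)"
    by (metis of_nat_le_iff of_nat_power)
  moreover have "real N ^ card (fst T) > 0" using assms by simp
  ultimately show ?thesis unfolding hom_density_def by simp
qed

lemma weight_bounds:
  assumes fin: "\<forall>k\<in>{1..K}. finite (fst (T k))" and N: "N \<ge> 1"
  shows "exp (- (real N ^ 2 * (\<Sum>k=1..K. \<bar>\<beta> k\<bar>))) \<le> ergm_weight K \<beta> T N G
     \<and> ergm_weight K \<beta> T N G \<le> exp (real N ^ 2 * (\<Sum>k=1..K. \<bar>\<beta> k\<bar>))"
proof -
  define S where "S = (\<Sum>k=1..K. \<beta> k * hom_density (T k) N G)"
  define B where "B = (\<Sum>k=1..K. \<bar>\<beta> k\<bar>)"
  have "\<bar>S\<bar> \<le> (\<Sum>k=1..K. \<bar>\<beta> k * hom_density (T k) N G\<bar>)" unfolding S_def by (rule sum_abs)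
  also have "\<dots> \<le> B" unfolding B_def
  proof (rule sum_mono)
    fix k assume "k \<in> {1..K}"
    then have "0 \<le> hom_density (T k) N G \<and> hom_density (T k) N G \<le> 1"
      using density_bounds fin N by blast
    then show "\<bar>\<beta> k * hom_density (T k) N G\<bar> \<le> \<bar>\<beta> k\<bar>"
      by (simp add: abs_mult mult_left_le)
  qed
  finally have SB: "\<bar>S\<bar> \<le> B" .
  have q: "real N ^ 2 \<ge> 0" by simp
  have "real N ^ 2 * S \<le> real N ^ 2 * B" using SB q by (intro mult_left_mono) auto
  moreover have "- (real N ^ 2 * B) \<le> real N ^ 2 * S"
  proof -
    have "-S \<le> B" using SB by linarith
    then have "real N ^ 2 * (-S) \<le> real N ^ 2 * B" using q by (rule mult_left_mono)
    then show ?thesis by simp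
  qed
  ultimately show ?thesis unfolding ergm_weight_def S_def[symmetric] B_def[symmetric] by simp
qed

lemma prob_facts:
  assumes fin: "\<forall>k\<in>{1..K}. finite (fst (T k))" and N: "N \<ge> 1"
  shows "ergm_prob K \<beta> T N G > 0"
    and "sum (ergm_prob K \<beta> T N) (graphs_on N) = 1"
    and "1 / ergm_prob K \<beta> T N G \<le> real (card (graphs_on N)) * exp (2 * real N ^ 2 * (\<Sum>k=1..K. \<bar>\<beta> k\<bar>))"
proof -
  define w where "w = ergm_weight K \<beta> T N"
  define q where "q = real N ^ 2 * (\<Sum>k=1..K. \<bar>\<beta> k\<bar>)"
  have wb: "exp (- q) \<le> w H \<and> w H \<le> exp q" for H using weight_bounds[OF fin N] unfolding w_def q_def by blast
  have wpos: "w H > 0" for H unfolding w_def ergm_weight_def by simp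
  define Z where "Z = sum w (graphs_on N)"
  have Zpos: "Z > 0" unfolding Z_def
    using graphs_on_finite empty_in_graphs_on wpos by (intro sum_pos) auto
  have Zle: "Z \<le> real (card (graphs_on N)) * exp q" unfolding Z_def
    using sum_bounded_above[of "graphs_on N" w "exp q"] wb by auto
  have pdef: "ergm_prob K \<beta> T N H = w H / Z" for H unfolding ergm_prob_def w_def Z_def by simp
  show "ergm_prob K \<beta> T N G > 0" using pdef wpos Zpos by simp
  show "sum (ergm_prob K \<beta> T N) (graphs_on N) = 1"
    using Zpos by (simp add: pdef sum_divide_distrib[symmetric] Z_def)
  have "1 / ergm_prob K \<beta> T N G = Z / w G" using pdef wpos Zpos by simp
  also have "\<dots> \<le> (real (card (graphs_on N)) * exp q) / exp (- q)"
    using Zle wb[of G] wpos[of G] Zpos by (intro frac_le) (auto simp del: exp_minus)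
  also have "\<dots> = real (card (graphs_on N)) * exp (2 * q)" 
  proof -
    have e: "q - - q = 2 * q" by simp
    have "exp q / exp (-q) = exp (2*q)" using exp_diff[of q "-q"] unfolding e by simp
    then show ?thesis by (metis times_divide_eq_right)
  qed
  finally show "1 / ergm_prob K \<beta> T N G \<le> real (card (graphs_on N)) * exp (2 * real N ^ 2 * (\<Sum>k=1..K. \<bar>\<beta> k\<bar>))"
    by (simp add: q_def mult.assoc)
qed


lemma per_n_bound:
  assumes fin: "\<forall>k\<in>{1..K}. finite (fst (T k))" and N: "N \<ge> 1" and n: "n \<ge> 1" and \<delta>: "\<delta> > 0"
  shows "iid_prob K \<beta> T N n (\<lambda>s. (MAX G\<in>graphs_on N. \<bar>(\<Sum>i=1..n. X_stat K \<beta> T N s i G) / real n - 1\<bar>) > \<delta>)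
     \<le> real (card (graphs_on N)) * (real (card (graphs_on N)) * exp (2 * real N ^ 2 * (\<Sum>k=1..K. \<bar>\<beta> k\<bar>))) / (\<delta>^2 * real n)"
proof -
  define \<Omega> where "\<Omega> = graphs_on N"
  define p where "p = ergm_prob K \<beta> T N"
  define C where "C = real (card \<Omega>) * exp (2 * real N ^ 2 * (\<Sum>k=1..K. \<bar>\<beta> k\<bar>))"
  have Om: "finite \<Omega>" "\<Omega> \<noteq> {}" using graphs_on_finite empty_in_graphs_on by (auto simp: \<Omega>_def)
  have ppos: "p G > 0" for G using prob_facts(1)[OF fin N] p_def by simp
  have p1: "sum p \<Omega> = 1" using prob_facts(2)[OF fin N] by (simp add: p_def \<Omega>_def)
  have pinv: "1 / p G \<le> C" for G using prob_facts(3)[OF fin N] by (simp add: p_def C_def \<Omega>_def)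
  define Z where "Z G x = (if x = G then 1 else 0) / p G - 1" for G x
  define Y where "Y s G = (\<Sum>i\<in>{1..n}. Z G (s i))" for s G
  have Xeq: "(\<Sum>i=1..n. X_stat K \<beta> T N s i G) / real n - 1 = Y s G / real n" for s G
  proof -
    have "(\<Sum>i=1..n. X_stat K \<beta> T N s i G) = (\<Sum>i=1..n. Z G (s i) + 1)"
      by (intro sum.cong refl) (simp add: X_stat_def Z_def p_def)
    also have "\<dots> = Y s G + real n" by (simp add: sum.distrib Y_def)
    finally show ?thesis using n by (simp add: field_simps)
  qed
  have Zmean: "(\<Sum>x\<in>\<Omega>. p x * Z G x) = 0" if "G \<in> \<Omega>" for G
  proof -
    have "(\<Sum>x\<in>\<Omega>. p x * Z G x) = (\<Sum>x\<in>\<Omega>. (if x = G then 1 else 0) - p x)"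
      using ppos[of G] by (intro sum.cong refl) (auto simp: Z_def field_simps)
    also have "\<dots> = 1 - 1" using that Om p1 by (simp add: sum_subtractf)
    finally show ?thesis by simp
  qed
  have Zvar: "(\<Sum>x\<in>\<Omega>. p x * (Z G x * Z G x)) \<le> 1 / p G" if "G \<in> \<Omega>" for G
  proof -
    have "(\<Sum>x\<in>\<Omega>. p x * (Z G x * Z G x)) = p G * (Z G G * Z G G) + (\<Sum>x\<in>\<Omega>-{G}. p x * (Z G x * Z G x))"
      using that Om by (simp add: sum.remove)
    also have "(\<Sum>x\<in>\<Omega>-{G}. p x * (Z G x * Z G x)) = (\<Sum>x\<in>\<Omega>-{G}. p x)"
      by (intro sum.cong refl) (auto simp: Z_def)
    also have "\<dots> = 1 - p G" using p1 that Om by (simp add: sum_diff1)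
    also have "p G * (Z G G * Z G G) = (1 - p G)^2 / p G"
      using ppos[of G] by (simp add: Z_def field_simps power2_eq_square)
    also have "(1 - p G)^2 / p G + (1 - p G) = (1 - p G) / p G"
      using ppos[of G] by (simp add: field_simps power2_eq_square)
    also have "\<dots> \<le> 1 / p G" using ppos[of G] by (intro divide_right_mono) auto
    finally show ?thesis .
  qed
  define P where "P s = ((MAX G\<in>\<Omega>. \<bar>Y s G / real n\<bar>) > \<delta>)" for s
  have iid: "iid_prob K \<beta> T N n (\<lambda>s. (MAX G\<in>graphs_on N. \<bar>(\<Sum>i=1..n. X_stat K \<beta> T N s i G) / real n - 1\<bar>) > \<delta>)
      = (\<Sum>s\<in>{1..n} \<rightarrow>\<^sub>E \<Omega>. if P s then \<Prod>i=1..n. p (s i) else 0)"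
    by (simp only: iid_prob_def P_def Xeq \<Omega>_def p_def)
  have ind: "(if P s then \<Prod>i=1..n. p (s i) else 0)
      \<le> (\<Prod>i=1..n. p (s i)) * (\<Sum>G\<in>\<Omega>. (Y s G)^2 / (\<delta>^2 * real n ^ 2))" for s
  proof -
    have prodnn: "(\<Prod>i=1..n. p (s i)) \<ge> 0" using ppos by (simp add: prod_nonneg less_imp_le)
    have sumnn: "(\<Sum>G\<in>\<Omega>. (Y s G)^2 / (\<delta>^2 * real n ^ 2)) \<ge> 0" by (simp add: sum_nonneg)
    show ?thesis
    proof (cases "P s")
      case True
      then obtain G where G: "G \<in> \<Omega>" "\<bar>Y s G / real n\<bar> > \<delta>" unfolding P_def using Om by (auto simp: Max_gr_iff)
      have "1 \<le> (Y s G)^2 / (\<delta>^2 * real n ^ 2)"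
      proof -
        have "\<delta>^2 < \<bar>Y s G / real n\<bar>^2" by (rule power_strict_mono) (use G \<delta> in auto)
        then have "\<delta>^2 * real n ^ 2 < (Y s G)^2" using n by (simp add: power_divide field_simps)
        then show ?thesis using \<delta> n by (simp add: field_simps)
      qed
      also have "\<dots> \<le> (\<Sum>G\<in>\<Omega>. (Y s G)^2 / (\<delta>^2 * real n ^ 2))" using G Om by (intro member_le_sum) auto
      finally have "1 \<le> (\<Sum>G\<in>\<Omega>. (Y s G)^2 / (\<delta>^2 * real n ^ 2))" .
      then have "(\<Prod>i=1..n. p (s i)) * 1 \<le> (\<Prod>i=1..n. p (s i)) * (\<Sum>G\<in>\<Omega>. (Y s G)^2 / (\<delta>^2 * real n ^ 2))"
        using prodnn by (rule mult_left_mono)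
      then show ?thesis using True by simp
    next
      case False then show ?thesis using prodnn sumnn by simp
    qed
  qed
  have "iid_prob K \<beta> T N n (\<lambda>s. (MAX G\<in>graphs_on N. \<bar>(\<Sum>i=1..n. X_stat K \<beta> T N s i G) / real n - 1\<bar>) > \<delta>)
      \<le> (\<Sum>s\<in>{1..n} \<rightarrow>\<^sub>E \<Omega>. (\<Prod>i=1..n. p (s i)) * (\<Sum>G\<in>\<Omega>. (Y s G)^2 / (\<delta>^2 * real n ^ 2)))"
    unfolding iid by (intro sum_mono ind)
  also have "\<dots> = (\<Sum>s\<in>{1..n} \<rightarrow>\<^sub>E \<Omega>. \<Sum>G\<in>\<Omega>. (1 / (\<delta>^2 * real n ^ 2)) * ((\<Prod>i=1..n. p (s i)) * (Y s G)^2))"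
    by (simp add: sum_distrib_left)
  also have "\<dots> = (\<Sum>G\<in>\<Omega>. \<Sum>s\<in>{1..n} \<rightarrow>\<^sub>E \<Omega>. (1 / (\<delta>^2 * real n ^ 2)) * ((\<Prod>i=1..n. p (s i)) * (Y s G)^2))"
    by (rule sum.swap)
  also have "\<dots> = (\<Sum>G\<in>\<Omega>. (1 / (\<delta>^2 * real n ^ 2)) * (\<Sum>s\<in>{1..n} \<rightarrow>\<^sub>E \<Omega>. (\<Prod>i=1..n. p (s i)) * (Y s G)^2))"
    by (simp add: sum_distrib_left)
  also have "\<dots> = (\<Sum>G\<in>\<Omega>. (1 / (\<delta>^2 * real n ^ 2)) * (real n * (\<Sum>x\<in>\<Omega>. p x * (Z G x * Z G x))))"
  proof (intro sum.cong refl)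
    fix G assume G: "G \<in> \<Omega>"
    note eq = second_moment[OF Om(1) p1 Zmean[OF G], of n]
    show "1 / (\<delta>^2 * real n ^ 2) * (\<Sum>s\<in>{1..n} \<rightarrow>\<^sub>E \<Omega>. (\<Prod>i=1..n. p (s i)) * (Y s G)^2) =
      1 / (\<delta>^2 * real n ^ 2) * (real n * (\<Sum>x\<in>\<Omega>. p x * (Z G x * Z G x)))"
      by (simp only: Y_def eq)
  qed
  also have "\<dots> \<le> (\<Sum>G\<in>\<Omega>. (1 / (\<delta>^2 * real n ^ 2)) * (real n * C))"
  proof (intro sum_mono mult_left_mono)
    fix G assume "G \<in> \<Omega>"
    then show "(\<Sum>x\<in>\<Omega>. p x * (Z G x * Z G x)) \<le> C" using Zvar pinv order_trans by blast
  qed auto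
  also have "\<dots> = real (card \<Omega>) * C / (\<delta>^2 * real n)"
    using n by (simp add: power2_eq_square field_simps)
  finally show ?thesis by (simp add: C_def \<Omega>_def)
qed


lemma two_choose_two: "2 * (N choose 2) = N * (N - 1)"
proof (induction N)
  case 0 then show ?case by simp
next
  case (Suc N)
  have "Suc N choose 2 = N + (N choose 2)"
    by (simp add: numeral_2_eq_2)
  then show ?case using Suc by (cases N) (auto simp: algebra_simps)
qed

lemma bound_arith:
  fixes N n :: nat and B \<epsilon> :: real
  assumes N: "N \<ge> 2" and n: "n \<ge> 1" and \<epsilon>: "\<epsilon> > 0" and B: "B \<ge> 0"
  shows "real (card (graphs_on N)) * (real (card (graphs_on N)) * exp (2 * real N ^ 2 * B)) / ((\<epsilon> / real N)^2 * real n)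
    \<le> 4 * exp ((3 + 8 * B) * real (N choose 2)) / (\<epsilon>^2 * real n)"
proof -
  define c where "c = real (N choose 2)"
  define g where "g = real (card (graphs_on N))"
  have c2: "2 * c = real N * (real N - 1)"
  proof -
    have "real (2 * (N choose 2)) = real (N * (N - 1))" using two_choose_two[of N] by simp
    then show ?thesis using N unfolding c_def by (simp add: of_nat_diff)
  qed
  have Nsq: "real N ^ 2 \<le> 4 * c"
  proof -
    have "real N \<ge> 2" using N by simp
    then have "real N ^ 2 \<le> 2 * (real N * (real N - 1))" by (simp add: power2_eq_square algebra_simps)
    then show ?thesis using c2 by simp
  qed
  have h1: "g ^ 2 \<le> exp (2 * c)"
  proof -
    have "g \<le> 2 ^ (N choose 2)" unfolding g_def using card_graphs_on[of N]
      by (metis of_nat_le_iff of_nat_numeral of_nat_power)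
    then have "g ^ 2 \<le> (2 ^ (N choose 2)) ^ 2" by (intro power_mono) (auto simp: g_def)
    also have "\<dots> = 4 ^ (N choose 2)"
    proof -
      have "((2::real) ^ (N choose 2)) ^ 2 = (2^2) ^ (N choose 2)" by (metis power_mult mult.commute)
      then show ?thesis by simp
    qed
    also have "\<dots> \<le> exp 2 ^ (N choose 2)"
    proof (intro power_mono)
      have "2 \<le> exp (1::real)" using exp_ge_add_one_self[of 1] by simp
      then have "2 ^ 2 \<le> exp (1::real) ^ 2" by (intro power_mono) auto
      then show "4 \<le> exp (2::real)" by (simp add: exp_of_nat_mult[symmetric])
    qed auto
    also have "\<dots> = exp (2 * c)" unfolding c_def by (simp add: exp_of_nat_mult[symmetric] mult.commute)
    finally show ?thesis .
  qed
  have h2: "real N ^ 2 \<le> 4 * exp c"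
    using Nsq exp_ge_add_one_self[of c] by linarith
  have h3: "exp (2 * real N ^ 2 * B) \<le> exp (8 * c * B)"
    using Nsq B by (simp add: mult_right_mono)
  have "real N > 0" using N by simp
  then have "g * (g * exp (2 * real N ^ 2 * B)) / ((\<epsilon> / real N)^2 * real n)
      = (g ^ 2 * exp (2 * real N ^ 2 * B) * real N ^ 2) / (\<epsilon>^2 * real n)"
    using \<epsilon> n by (simp add: field_simps power2_eq_square)
  also have "\<dots> \<le> (exp (2 * c) * exp (8 * c * B) * (4 * exp c)) / (\<epsilon>^2 * real n)"
    using h1 h2 h3 \<epsilon> n by (intro divide_right_mono mult_mono) auto
  also have "exp (2 * c) * exp (8 * c * B) * (4 * exp c) = 4 * exp ((3 + 8 * B) * c)"
  proof -
    have e: "(3 + 8 * B) * c = 2 * c + 8 * c * B + c" by (simp add: algebra_simps)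
    show ?thesis unfolding e exp_add by (simp add: mult_ac del: mult_exp_exp)
  qed
  finally show ?thesis by (simp add: g_def c_def)
qed


lemma lim_aux: "(\<lambda>n. exp (ln (real n) / 2) / real n) \<longlonglongrightarrow> 0"
  by real_asymp

theorem mainTheorem16:
  fixes K :: nat and \<beta> :: "nat \<Rightarrow> real" and T :: "nat \<Rightarrow> nat set \<times> nat set set"
    and m :: "nat \<Rightarrow> nat" and \<epsilon> :: real
  assumes "K \<ge> 1"
    and "\<forall>k\<in>{1..K}. simple_graph (fst (T k)) (snd (T k))"
    and "card (fst (T 1)) = 2" and "snd (T 1) = {fst (T 1)}"
    and "\<forall>k\<in>{2..K}. card (snd (T k)) \<ge> 2"
    and "filterlim m at_top sequentially"
    and "(\<lambda>n. real (m n choose 2)) \<in> o(\<lambda>n. ln (real n))"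
    and "\<epsilon> > 0"
  shows "(\<lambda>n. iid_prob K \<beta> T (m n) n
            (\<lambda>s. (MAX G\<in>graphs_on (m n).
                    \<bar>(\<Sum>i=1..n. X_stat K \<beta> T (m n) s i G) / real n - 1\<bar>) > \<epsilon> / real (m n)))
         \<longlonglongrightarrow> 0"
proof -
  define B where "B = (\<Sum>k=1..K. \<bar>\<beta> k\<bar>)"
  define A where "A = 3 + 8 * B"
  have B0: "B \<ge> 0" unfolding B_def by (simp add: sum_nonneg)
  then have A0: "A > 0" unfolding A_def by simp
  have fin: "\<forall>k\<in>{1..K}. finite (fst (T k))" using assms(2) by (simp add: simple_graph_def)
  have ev1: "eventually (\<lambda>n. m n \<ge> 2) sequentially" using assms(6) by (simp add: filterlim_at_top)
  have ev2: "eventually (\<lambda>n. n \<ge> 1) sequentially" by (rule eventually_ge_at_top)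
  have ev3: "eventually (\<lambda>n. \<bar>real (m n choose 2)\<bar> \<le> (1 / (2 * A)) * \<bar>ln (real n)\<bar>) sequentially"
    using landau_o.smallD[OF assms(7), of "1 / (2 * A)"] A0 by simp
  define F where "F n = iid_prob K \<beta> T (m n) n
            (\<lambda>s. (MAX G\<in>graphs_on (m n).
                    \<bar>(\<Sum>i=1..n. X_stat K \<beta> T (m n) s i G) / real n - 1\<bar>) > \<epsilon> / real (m n))" for n
  have bound: "eventually (\<lambda>n. F n \<le> 4 / \<epsilon>^2 * (exp (ln (real n) / 2) / real n)) sequentially"
    using ev1 ev2 ev3
  proof eventually_elim
    case (elim n)
    define N where "N = m n"
    define c where "c = real (N choose 2)"
    have N2: "N \<ge> 2" and N1: "N \<ge> 1" using elim N_def by auto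
    have \<delta>: "\<epsilon> / real N > 0" using assms(8) N1 by simp
    have "F n \<le> real (card (graphs_on N)) * (real (card (graphs_on N)) * exp (2 * real N ^ 2 * B)) / ((\<epsilon> / real N)^2 * real n)"
      unfolding F_def N_def[symmetric] B_def using per_n_bound[OF fin N1 elim(2) \<delta>] .
    also have "\<dots> \<le> 4 * exp (A * c) / (\<epsilon>^2 * real n)"
      unfolding A_def c_def using bound_arith[OF N2 elim(2) assms(8) B0] .
    also have "\<dots> \<le> 4 * exp (ln (real n) / 2) / (\<epsilon>^2 * real n)"
    proof -
      have c0: "c \<ge> 0" unfolding c_def by simp
      have l0: "ln (real n) \<ge> 0" using elim(2) by simp
      have "c \<le> (1 / (2 * A)) * ln (real n)" using elim(3) c0 l0 unfolding c_def N_def by simp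
      then have "A * c \<le> ln (real n) / 2" using A0 by (simp add: field_simps)
      then show ?thesis using assms(8) elim(2) by (intro divide_right_mono mult_left_mono) auto
    qed
    also have "\<dots> = 4 / \<epsilon>^2 * (exp (ln (real n) / 2) / real n)" by simp
    finally show ?case .
  qed
  have nonneg: "eventually (\<lambda>n. 0 \<le> F n) sequentially"
    using ev1
  proof eventually_elim
    case (elim n)
    then have N1: "m n \<ge> 1" by simp
    show ?case unfolding F_def iid_prob_def
      using prob_facts(1)[OF fin N1] by (intro sum_nonneg) (auto intro: prod_nonneg less_imp_le)
  qed
  have lim: "(\<lambda>n. 4 / \<epsilon>^2 * (exp (ln (real n) / 2) / real n)) \<longlonglongrightarrow> 0"
    using tendsto_mult[OF tendsto_const lim_aux, of "4 / \<epsilon>^2"] by simp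
  have "F \<longlonglongrightarrow> 0" by (rule tendsto_sandwich[OF nonneg bound tendsto_const lim])
  then show ?thesis unfolding F_def .
qed

end
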